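(* Let $n\ge5$, let $G$ and $H$ be non-trivial groups, let $\sigma\colon G\to S_n$ be a surjective homomorphism, and let $W=H\wr_\sigma G=H^n\rtimes_\sigma G$. Then the following are equivalent: ($\ast$) every abelian normal subgroup of $W$ is contained in $H^n$ (identified with $\{(\mathbf h,1)\}$); ($\ast\ast$) $\ker\sigma$ contains no non-trivial abelian normal subgroup of $G$.
   Context: For $n\ge2$, groups $G,H$ and a homomorphism $\sigma\colon G\to S_n$, $H\wr_\sigma G=H^n\rtimes_\sigma G$ is the semidirect product in which $G$ acts on $H^n$ by permuting coordinates through $\sigma$: $g\cdot(h_1,\dots,h_n)=(h_{\sigma(g)(1)},\dots,h_{\sigma(g)(n)})$ (with the composition convention in $S_n$ making this a left action); elements are pairs $(\mathbf h,g)$ with $(\mathbf h,g)(\mathbf k,x)=(\mathbf h\cdot g\mathbf k,gx)$. *)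

theory Defs
  imports "HOL-Algebra.Algebra"
begin

text \<open>Since sym_group composes as functions, the left action of g on H^n is
  (g \<cdot> k) i = k ((sigma g)^-1 i).\<close>

definition wr_act :: "('b, 'd) monoid_scheme \<Rightarrow> nat \<Rightarrow> ('a \<Rightarrow> nat \<Rightarrow> nat) \<Rightarrow> 'a \<Rightarrow> (nat \<Rightarrow> 'b) \<Rightarrow> (nat \<Rightarrow> 'b)"
  where "wr_act H n \<sigma> g k = (\<lambda>i\<in>{1..n}. k (Hilbert_Choice.inv (\<sigma> g) i))"

definition wreath :: "('b, 'd) monoid_scheme \<Rightarrow> nat \<Rightarrow> ('a, 'c) monoid_scheme \<Rightarrow> ('a \<Rightarrow> nat \<Rightarrow> nat)
    \<Rightarrow> ((nat \<Rightarrow> 'b) \<times> 'a) monoid"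
  where "wreath H n G \<sigma> =
    \<lparr> carrier = ({1..n} \<rightarrow>\<^sub>E carrier H) \<times> carrier G,
      monoid.mult = (\<lambda>(h, g) (k, x). ((\<lambda>i\<in>{1..n}. h i \<otimes>\<^bsub>H\<^esub> wr_act H n \<sigma> g k i), g \<otimes>\<^bsub>G\<^esub> x)),
      monoid.one = ((\<lambda>i\<in>{1..n}. \<one>\<^bsub>H\<^esub>), \<one>\<^bsub>G\<^esub>) \<rparr>"

definition wr_base :: "('b, 'd) monoid_scheme \<Rightarrow> nat \<Rightarrow> ('a, 'c) monoid_scheme \<Rightarrow> ((nat \<Rightarrow> 'b) \<times> 'a) set"
  where "wr_base H n G = ({1..n} \<rightarrow>\<^sub>E carrier H) \<times> {\<one>\<^bsub>G\<^esub>}"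

end

theory Submission
  imports Defs
begin


definition tp :: "nat \<Rightarrow> nat \<Rightarrow> nat \<Rightarrow> nat" where
  "tp x y = (\<lambda>z. if z = x then y else if z = y then x else z)"

lemma tp_permutes: "x \<in> U \<Longrightarrow> y \<in> U \<Longrightarrow> tp x y permutes U"
proof -
  have "tp x y = transpose x y" by (auto simp: fun_eq_iff tp_def transpose_def)
  thus "x \<in> U \<Longrightarrow> y \<in> U \<Longrightarrow> tp x y permutes U" by (simp add: permutes_swap_id)
qed

lemma tp_inv: "inv' (tp x y) = tp x y"
proof -
  have "tp x y \<circ> tp x y = id" by (auto simp: tp_def fun_eq_iff)
  thus ?thesis by (metis inv_unique_comp)
qed

locale abn =
  fixes n :: nat and K :: "(nat \<Rightarrow> nat) set"
  assumes sub: "\<And>p. p \<in> K \<Longrightarrow> p permutes {1..n}"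
    and comm: "\<And>p q. p \<in> K \<Longrightarrow> q \<in> K \<Longrightarrow> p \<circ> q = q \<circ> p"
    and divc: "\<And>p q. p \<in> K \<Longrightarrow> q \<in> K \<Longrightarrow> p \<circ> inv' q \<in> K"
    and conj: "\<And>t p. t permutes {1..n} \<Longrightarrow> p \<in> K \<Longrightarrow> t \<circ> p \<circ> inv' t \<in> K"
begin

lemma S:
  assumes r: "r \<in> K" and ab: "r a \<noteq> a" and c: "c \<noteq> a" "c \<noteq> r a" "c \<in> {1..n}"
  shows "r c \<noteq> c"
proof
  assume rc: "r c = c"
  have p: "r permutes {1..n}" using sub r by auto
  have a: "a \<in> {1..n}" using p ab by (meson permutes_not_in)
  have b: "r a \<in> {1..n}" using p a by (metis permutes_in_image)
  define t where "t = tp (r a) c"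
  have tpp: "t permutes {1..n}" unfolding t_def using b c by (simp add: tp_permutes)
  have q: "t \<circ> r \<circ> t \<in> K" using conj[OF tpp r] by (simp add: t_def tp_inv)
  have "(r \<circ> (t \<circ> r \<circ> t)) a = ((t \<circ> r \<circ> t) \<circ> r) a" using comm[OF r q] by simp
  then show False using ab c rc by (simp add: t_def tp_def split: if_splits)
qed

lemma L:
  assumes r: "r \<in> K" and x: "r x = x" "x \<in> {1..n}" shows "r = id"
proof (rule ccontr)
  assume "r \<noteq> id"
  then obtain a where a: "r a \<noteq> a" by (auto simp: fun_eq_iff)
  have p: "r permutes {1..n}" using sub r by auto
  have xa: "x \<noteq> a" using a x by auto
  have xb: "x \<noteq> r a" using x a p by (metis permutes_inj injD)
  show False using S[OF r a xa xb x(2)] x by simp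
qed

lemma key:
  assumes n: "n \<ge> 5" and p: "p \<in> K" shows "p = id"
proof (rule ccontr)
  assume "p \<noteq> id"
  then obtain a where a: "p a \<noteq> a" by (auto simp: fun_eq_iff)
  have pp: "p permutes {1..n}" using sub p by auto
  have ai: "a \<in> {1..n}" using pp a by (meson permutes_not_in)
  have bi: "p a \<in> {1..n}" using pp ai by (metis permutes_in_image)
  have "card ({1..n} - {a, p a, inv' p a}) \<ge> n - 3"
  proof -
    have "card {a, p a, inv' p a} \<le> 3" by (rule order_trans[OF card_insert_le_m1]) (auto simp: card_insert_le_m1)
    moreover have "card ({1..n} - {a, p a, inv' p a}) \<ge> card {1..n} - card {a, p a, inv' p a}" by (rule diff_card_le_card_Diff) auto
    ultimately show ?thesis by simp
  qed
  hence "card ({1..n} - {a, p a, inv' p a}) > 0" using n by linarith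
  hence "{1..n} - {a, p a, inv' p a} \<noteq> {}" by (metis card_gt_0_iff)
  then obtain c where c: "c \<in> {1..n}" "c \<noteq> a" "c \<noteq> p a" "c \<noteq> inv' p a" by blast
  define d where "d = p c"
  have dc: "d \<noteq> c" using S[OF p a c(2) c(3) c(1)] d_def by simp
  have db: "d \<noteq> p a" using c(2) pp d_def by (metis permutes_inj injD)
  have da: "d \<noteq> a" using c(4) pp d_def by (metis permutes_inverses(2))
  have di: "d \<in> {1..n}" using pp c(1) d_def by (metis permutes_in_image)
  have "card ({1..n} - {a, p a, c, d}) \<ge> n - 4"
  proof -
    have "card {a, p a, c, d} \<le> 4" by (rule order_trans[OF card_insert_le_m1]) (auto simp: card_insert_le_m1)
    moreover have "card ({1..n} - {a, p a, c, d}) \<ge> card {1..n} - card {a, p a, c, d}" by (rule diff_card_le_card_Diff) auto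
    ultimately show ?thesis by simp
  qed
  hence "card ({1..n} - {a, p a, c, d}) > 0" using n by linarith
  hence "{1..n} - {a, p a, c, d} \<noteq> {}" by (metis card_gt_0_iff)
  then obtain e where e: "e \<in> {1..n}" "e \<noteq> a" "e \<noteq> p a" "e \<noteq> c" "e \<noteq> d" by blast
  define t where "t = tp d e"
  have tpp: "t permutes {1..n}" unfolding t_def using di e by (simp add: tp_permutes)
  define q where "q = t \<circ> p \<circ> t"
  have q: "q \<in> K" using conj[OF tpp p] by (simp add: q_def t_def tp_inv)
  have qp: "q permutes {1..n}" using sub q by auto
  have qa: "q a = p a" using da db e by (simp add: q_def t_def tp_def)
  have tc: "t c = c" using dc e(4) unfolding t_def tp_def by auto
  have td: "t d = e" unfolding t_def tp_def by auto
  have qc: "q c = e" unfolding q_def using tc td d_def by simp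
  have iq: "inv' q (p a) = a" using qa qp by (metis permutes_inverses(2))
  have r: "p \<circ> inv' q \<in> K" using divc[OF p q] .
  have "p \<circ> inv' q = id" using L[OF r _ bi] iq by simp
  hence "p = q"
  proof -
    assume h: "p \<circ> inv' q = id"
    have "p = p \<circ> (inv' q \<circ> q)" using qp by (simp add: permutes_inv_o(2))
    also have "\<dots> = (p \<circ> inv' q) \<circ> q" by (simp add: comp_assoc)
    finally show "p = q" using h by simp
  qed
  thus False using qc d_def e(5) by simp
qed
end


locale wr = G: group G + H: group H
  for G :: "('a, 'c) monoid_scheme" and H :: "('b, 'd) monoid_scheme" +
  fixes n :: nat and \<sigma> :: "'a \<Rightarrow> nat \<Rightarrow> nat"
  assumes hom: "\<sigma> \<in> hom G (sym_group n)"
begin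

sublocale S: group_hom G "sym_group n" \<sigma>
  by (rule group_hom.intro[OF G.is_group sym_group_is_group]) (simp add: group_hom_axioms_def hom)

lemma sig_perm: "g \<in> carrier G \<Longrightarrow> \<sigma> g permutes {1..n}"
  using S.hom_closed sym_group_carrier by blast

lemma sig_bij: "g \<in> carrier G \<Longrightarrow> bij (\<sigma> g)"
  using sig_perm permutes_bij by blast

lemma isig_in: "g \<in> carrier G \<Longrightarrow> i \<in> {1..n} \<Longrightarrow> inv' (\<sigma> g) i \<in> {1..n}"
  by (meson permutes_in_image permutes_inv sig_perm)

lemma isig_in2: "g \<in> carrier G \<Longrightarrow> Suc 0 \<le> i \<Longrightarrow> i \<le> n \<Longrightarrow> Suc 0 \<le> inv' (\<sigma> g) i \<and> inv' (\<sigma> g) i \<le> n"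
  using isig_in[of g i] by simp

lemma sig_in2: "g \<in> carrier G \<Longrightarrow> Suc 0 \<le> i \<Longrightarrow> i \<le> n \<Longrightarrow> Suc 0 \<le> \<sigma> g i \<and> \<sigma> g i \<le> n"
  using sig_perm[of g] permutes_in_image[of "\<sigma> g" "{1..n}" i] by simp

lemma iisig: "g \<in> carrier G \<Longrightarrow> inv' (inv' (\<sigma> g)) = \<sigma> g"
  by (simp add: sig_bij inv_inv_eq)

lemma sig_mult: "g \<in> carrier G \<Longrightarrow> x \<in> carrier G \<Longrightarrow> \<sigma> (g \<otimes>\<^bsub>G\<^esub> x) = \<sigma> g \<circ> \<sigma> x"
  using S.hom_mult sym_group_mult by metis

lemma isig_mult: "g \<in> carrier G \<Longrightarrow> x \<in> carrier G \<Longrightarrow>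
   inv' (\<sigma> (g \<otimes>\<^bsub>G\<^esub> x)) i = inv' (\<sigma> x) (inv' (\<sigma> g) i)"
  by (simp add: sym_group_mult sig_bij o_inv_distrib)

lemma sig_one: "\<sigma> \<one>\<^bsub>G\<^esub> = id"
  using S.hom_one sym_group_one by metis

lemma sig_inv: "g \<in> carrier G \<Longrightarrow> \<sigma> (inv\<^bsub>G\<^esub> g) = inv' (\<sigma> g)"
  using S.hom_inv S.hom_closed sym_group_inv_equality by metis

abbreviation "W \<equiv> wreath H n G \<sigma>"

lemma W_carrier: "carrier W = ({1..n} \<rightarrow>\<^sub>E carrier H) \<times> carrier G"
  by (simp add: wreath_def)

lemma W_one: "\<one>\<^bsub>W\<^esub> = ((\<lambda>i\<in>{1..n}. \<one>\<^bsub>H\<^esub>), \<one>\<^bsub>G\<^esub>)"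
  by (simp add: wreath_def)

lemma W_mult: "(h, g) \<otimes>\<^bsub>W\<^esub> (k, x) = ((\<lambda>i\<in>{1..n}. h i \<otimes>\<^bsub>H\<^esub> k (inv' (\<sigma> g) i)), g \<otimes>\<^bsub>G\<^esub> x)"
  by (auto simp: wreath_def wr_act_def intro!: restrict_ext)

lemma W_mult_snd: "snd (w \<otimes>\<^bsub>W\<^esub> v) = snd w \<otimes>\<^bsub>G\<^esub> snd v"
  by (cases w, cases v) (simp add: W_mult)

lemma W_group: "group W"
proof (rule groupI)
  fix w v assume w: "w \<in> carrier W" and v: "v \<in> carrier W"
  obtain h g where hg: "w = (h, g)" by (cases w)
  obtain k x where kx: "v = (k, x)" by (cases v)
  show "w \<otimes>\<^bsub>W\<^esub> v \<in> carrier W"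
    using w v unfolding hg kx W_mult W_carrier by (auto simp: PiE_iff isig_in2 intro!: H.m_closed)
next
  show "\<one>\<^bsub>W\<^esub> \<in> carrier W" by (auto simp: W_one W_carrier)
next
  fix w v u assume w: "w \<in> carrier W" and v: "v \<in> carrier W" and u: "u \<in> carrier W"
  obtain h g where hg: "w = (h, g)" by (cases w)
  obtain k x where kx: "v = (k, x)" by (cases v)
  obtain l y where ly: "u = (l, y)" by (cases u)
  show "w \<otimes>\<^bsub>W\<^esub> v \<otimes>\<^bsub>W\<^esub> u = w \<otimes>\<^bsub>W\<^esub> (v \<otimes>\<^bsub>W\<^esub> u)"
  proof -
    have hk: "h \<in> {1..n} \<rightarrow>\<^sub>E carrier H" "k \<in> {1..n} \<rightarrow>\<^sub>E carrier H" "l \<in> {1..n} \<rightarrow>\<^sub>E carrier H"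
      and gx: "g \<in> carrier G" "x \<in> carrier G" "y \<in> carrier G"
      using w v u unfolding hg kx ly W_carrier by auto
    have pt: "\<And>i. i \<in> {1..n} \<Longrightarrow> h i \<otimes>\<^bsub>H\<^esub> k (inv' (\<sigma> g) i) \<otimes>\<^bsub>H\<^esub> l (inv' (\<sigma> (g \<otimes>\<^bsub>G\<^esub> x)) i)
       = h i \<otimes>\<^bsub>H\<^esub> (k (inv' (\<sigma> g) i) \<otimes>\<^bsub>H\<^esub> l (inv' (\<sigma> x) (inv' (\<sigma> g) i)))"
    proof -
      fix i assume i: "i \<in> {1..n}"
      have j: "inv' (\<sigma> g) i \<in> {1..n}" "inv' (\<sigma> x) (inv' (\<sigma> g) i) \<in> {1..n}"
        using isig_in gx i by auto
      show "h i \<otimes>\<^bsub>H\<^esub> k (inv' (\<sigma> g) i) \<otimes>\<^bsub>H\<^esub> l (inv' (\<sigma> (g \<otimes>\<^bsub>G\<^esub> x)) i)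
       = h i \<otimes>\<^bsub>H\<^esub> (k (inv' (\<sigma> g) i) \<otimes>\<^bsub>H\<^esub> l (inv' (\<sigma> x) (inv' (\<sigma> g) i)))"
        unfolding isig_mult[OF gx(1,2)]
        by (rule H.m_assoc) (use hk i j in auto)
    qed
    have pt2: "\<And>i. i \<in> {1..n} \<Longrightarrow> (\<lambda>i\<in>{1..n}. k i \<otimes>\<^bsub>H\<^esub> l (inv' (\<sigma> x) i)) (inv' (\<sigma> g) i)
       = k (inv' (\<sigma> g) i) \<otimes>\<^bsub>H\<^esub> l (inv' (\<sigma> x) (inv' (\<sigma> g) i))"
      using isig_in gx by auto
    show ?thesis unfolding hg kx ly W_mult
      by (auto simp: G.m_assoc gx pt pt2 isig_in2 simp del: S.hom_mult intro!: restrict_ext)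
  qed
next
  fix w assume w: "w \<in> carrier W"
  obtain h g where hg: "w = (h, g)" by (cases w)
  show "\<one>\<^bsub>W\<^esub> \<otimes>\<^bsub>W\<^esub> w = w"
    using w unfolding hg W_one W_mult W_carrier
    by (auto simp: PiE_iff sym_group_one fun_eq_iff extensional_def)
next
  fix w assume w: "w \<in> carrier W"
  obtain h g where hg: "w = (h, g)" by (cases w)
  show "\<exists>y\<in>carrier W. y \<otimes>\<^bsub>W\<^esub> w = \<one>\<^bsub>W\<^esub>"
  proof (intro bexI)
    show "((\<lambda>i\<in>{1..n}. inv\<^bsub>H\<^esub> (h (inv' (\<sigma> (inv\<^bsub>G\<^esub> g)) i))), inv\<^bsub>G\<^esub> g) \<otimes>\<^bsub>W\<^esub> w = \<one>\<^bsub>W\<^esub>"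
      using w unfolding hg W_one W_mult W_carrier
      by (auto simp: PiE_iff isig_in isig_in2 sig_in2 iisig fun_eq_iff)
    show "((\<lambda>i\<in>{1..n}. inv\<^bsub>H\<^esub> (h (inv' (\<sigma> (inv\<^bsub>G\<^esub> g)) i))), inv\<^bsub>G\<^esub> g) \<in> carrier W"
      using w unfolding hg W_carrier by (auto simp: PiE_iff isig_in2 sig_in2 iisig)
  qed
qed

lemma W_inv: "(h, g) \<in> carrier W \<Longrightarrow>
  inv\<^bsub>W\<^esub> (h, g) = ((\<lambda>i\<in>{1..n}. inv\<^bsub>H\<^esub> (h (inv' (\<sigma> (inv\<^bsub>G\<^esub> g)) i))), inv\<^bsub>G\<^esub> g)"
  apply (rule group.inv_equality[OF W_group])
  by (auto simp: W_carrier W_one W_mult PiE_iff isig_in isig_in2 sig_in2 iisig fun_eq_iff)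

lemma W_inv_snd: "w \<in> carrier W \<Longrightarrow> snd (inv\<^bsub>W\<^esub> w) = inv\<^bsub>G\<^esub> (snd w)"
  by (cases w) (simp add: W_inv)

end


context wr begin

abbreviation "ev \<equiv> (\<lambda>i\<in>{1..n}. \<one>\<^bsub>H\<^esub>)"

lemma ev_mult: "g \<in> carrier G \<Longrightarrow> (ev, g) \<otimes>\<^bsub>W\<^esub> (ev, x) = (ev, g \<otimes>\<^bsub>G\<^esub> x)"
  unfolding W_mult by (auto simp: isig_in2 intro!: restrict_ext)

lemma dir1:
  assumes star: "\<forall>A. A \<lhd> W \<and> (\<forall>x\<in>A. \<forall>y\<in>A. x \<otimes>\<^bsub>W\<^esub> y = y \<otimes>\<^bsub>W\<^esub> x) \<longrightarrow> A \<subseteq> wr_base H n G"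
    and N: "N \<lhd> G" and ab: "\<forall>x\<in>N. \<forall>y\<in>N. x \<otimes>\<^bsub>G\<^esub> y = y \<otimes>\<^bsub>G\<^esub> x"
    and ker: "N \<subseteq> kernel G (sym_group n) \<sigma>"
  shows "N = {\<one>\<^bsub>G\<^esub>}"
proof -
  interpret W: group W by (rule W_group)
  interpret N: normal N G by (rule N)
  have NG: "N \<subseteq> carrier G" by (rule N.subset)
  have oneN: "\<one>\<^bsub>G\<^esub> \<in> N" using subgroup.one_closed[OF normal_imp_subgroup[OF N]] .
  have sid: "\<And>g. g \<in> N \<Longrightarrow> \<sigma> g = id" using ker by (auto simp: kernel_def sym_group_one)
  define A where "A = {(ev, g) | g. g \<in> N}"
  have evc: "ev \<in> {1..n} \<rightarrow>\<^sub>E carrier H" by auto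
  have AW: "A \<subseteq> carrier W" using NG by (auto simp: A_def W_carrier)
  have invA: "inv\<^bsub>W\<^esub> (ev, g) = (ev, inv\<^bsub>G\<^esub> g)" if "g \<in> N" for g
  proof -
    have gG: "g \<in> carrier G" using that NG by auto
    show ?thesis using gG W_inv[of ev g] by (auto simp: W_carrier isig_in2 sig_in2 iisig intro!: restrict_ext)
  qed
  have sub: "subgroup A W"
  proof (rule W.subgroupI)
    show "A \<subseteq> carrier W" by (rule AW)
    have "(ev, \<one>\<^bsub>G\<^esub>) \<in> A" using oneN unfolding A_def by blast
    thus "A \<noteq> {}" by blast
    fix a assume "a \<in> A"
    then obtain g where g: "g \<in> N" "a = (ev, g)" by (auto simp: A_def)
    show "inv\<^bsub>W\<^esub> a \<in> A" using g invA by (auto simp: A_def)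
  next
    fix a b assume "a \<in> A" "b \<in> A"
    then obtain g x where g: "g \<in> N" "a = (ev, g)" "x \<in> N" "b = (ev, x)" by (auto simp: A_def)
    show "a \<otimes>\<^bsub>W\<^esub> b \<in> A" using g NG ev_mult[of g x] by (auto simp: A_def)
  qed
  have conjA: "w \<otimes>\<^bsub>W\<^esub> a \<otimes>\<^bsub>W\<^esub> inv\<^bsub>W\<^esub> w \<in> A" if w: "w \<in> carrier W" and a: "a \<in> A" for w a
  proof -
    obtain g where g: "g \<in> N" "a = (ev, g)" using a by (auto simp: A_def)
    obtain h x where hx: "w = (h, x)" by (cases w)
    have h: "h \<in> {1..n} \<rightarrow>\<^sub>E carrier H" and x: "x \<in> carrier G" using w hx by (auto simp: W_carrier)
    have gG: "g \<in> carrier G" using g NG by auto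
    have xgx: "x \<otimes>\<^bsub>G\<^esub> g \<otimes>\<^bsub>G\<^esub> inv\<^bsub>G\<^esub> x \<in> N" using N.inv_op_closed2 x g by blast
    have s1: "w \<otimes>\<^bsub>W\<^esub> a = (h, x \<otimes>\<^bsub>G\<^esub> g)"
      unfolding hx g W_mult using h x by (auto simp: isig_in2 PiE_iff extensional_def fun_eq_iff)
    have sxg: "\<sigma> (x \<otimes>\<^bsub>G\<^esub> g) = \<sigma> x" using sid[OF g(1)] sig_mult[OF x gG] by simp
    have "(h, x \<otimes>\<^bsub>G\<^esub> g) \<otimes>\<^bsub>W\<^esub> inv\<^bsub>W\<^esub> (h, x) = (ev, x \<otimes>\<^bsub>G\<^esub> g \<otimes>\<^bsub>G\<^esub> inv\<^bsub>G\<^esub> x)"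
    proof -
      have e1: "inv\<^bsub>W\<^esub> (h, x) = ((\<lambda>i\<in>{1..n}. inv\<^bsub>H\<^esub> (h (inv' (\<sigma> (inv\<^bsub>G\<^esub> x)) i))), inv\<^bsub>G\<^esub> x)"
        using W_inv h x by (simp add: W_carrier)
      have e2: "\<And>i. i \<in> {1..n} \<Longrightarrow> h i \<otimes>\<^bsub>H\<^esub> (\<lambda>i\<in>{1..n}. inv\<^bsub>H\<^esub> (h (inv' (\<sigma> (inv\<^bsub>G\<^esub> x)) i))) (inv' (\<sigma> x) i) = \<one>\<^bsub>H\<^esub>"
      proof -
        fix i assume i: "i \<in> {1..n}"
        have "inv' (\<sigma> x) i \<in> {1..n}" using isig_in x i by auto
        moreover have "inv' (\<sigma> (inv\<^bsub>G\<^esub> x)) (inv' (\<sigma> x) i) = i"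
          using x sig_inv iisig sig_perm permutes_inverses(1) by metis
        ultimately show "h i \<otimes>\<^bsub>H\<^esub> (\<lambda>i\<in>{1..n}. inv\<^bsub>H\<^esub> (h (inv' (\<sigma> (inv\<^bsub>G\<^esub> x)) i))) (inv' (\<sigma> x) i) = \<one>\<^bsub>H\<^esub>"
          using h i by (auto simp: PiE_iff)
      qed
      show ?thesis unfolding e1 W_mult sxg
        apply (rule arg_cong2[where f=Pair])
         apply (rule restrict_ext)
         apply (erule e2)
        apply (rule refl)
        done
    qed
    then show ?thesis using s1 xgx hx by (auto simp: A_def)
  qed
  have "A \<lhd> W" using W.normal_inv_iff sub conjA by blast
  moreover have "\<forall>x\<in>A. \<forall>y\<in>A. x \<otimes>\<^bsub>W\<^esub> y = y \<otimes>\<^bsub>W\<^esub> x"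
    using ab NG ev_mult by (auto simp: A_def)
  ultimately have "A \<subseteq> wr_base H n G" using star by blast
  hence "\<And>g. g \<in> N \<Longrightarrow> g = \<one>\<^bsub>G\<^esub>" by (auto simp: A_def wr_base_def)
  thus ?thesis using oneN by blast
qed

lemma dir2:
  assumes n5: "n \<ge> 5" and surj: "\<sigma> ` carrier G = carrier (sym_group n)"
    and ss: "\<forall>N. N \<lhd> G \<and> (\<forall>x\<in>N. \<forall>y\<in>N. x \<otimes>\<^bsub>G\<^esub> y = y \<otimes>\<^bsub>G\<^esub> x)
              \<and> N \<subseteq> kernel G (sym_group n) \<sigma> \<longrightarrow> N = {\<one>\<^bsub>G\<^esub>}"
    and A: "A \<lhd> W" and ab: "\<forall>x\<in>A. \<forall>y\<in>A. x \<otimes>\<^bsub>W\<^esub> y = y \<otimes>\<^bsub>W\<^esub> x"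
  shows "A \<subseteq> wr_base H n G"
proof -
  interpret W: group W by (rule W_group)
  interpret A: normal A W by (rule A)
  have AW: "A \<subseteq> carrier W" by (rule A.subset)
  have sgA: "subgroup A W" using normal_imp_subgroup[OF A] .
  define M where "M = snd ` A"
  have MG: "M \<subseteq> carrier G" using AW by (auto simp: M_def W_carrier)
  have subM: "subgroup M G"
  proof (rule G.subgroupI)
    show "M \<subseteq> carrier G" by (rule MG)
    have "\<one>\<^bsub>W\<^esub> \<in> A" using subgroup.one_closed[OF sgA] .
    thus "M \<noteq> {}" unfolding M_def by blast
    fix a assume "a \<in> M"
    then obtain w where w: "w \<in> A" "a = snd w" by (auto simp: M_def)
    have "inv\<^bsub>W\<^esub> w \<in> A" using subgroup.m_inv_closed[OF sgA w(1)] .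
    moreover have "snd (inv\<^bsub>W\<^esub> w) = inv\<^bsub>G\<^esub> a" using W_inv_snd w AW by auto
    ultimately show "inv\<^bsub>G\<^esub> a \<in> M" unfolding M_def by (metis image_eqI)
  next
    fix a b assume "a \<in> M" "b \<in> M"
    then obtain w v where w: "w \<in> A" "a = snd w" "v \<in> A" "b = snd v" by (auto simp: M_def)
    have "w \<otimes>\<^bsub>W\<^esub> v \<in> A" using subgroup.m_closed[OF sgA w(1) w(3)] .
    moreover have "snd (w \<otimes>\<^bsub>W\<^esub> v) = a \<otimes>\<^bsub>G\<^esub> b" using W_mult_snd w by simp
    ultimately show "a \<otimes>\<^bsub>G\<^esub> b \<in> M" unfolding M_def by (metis image_eqI)
  qed
  have conjM: "x \<otimes>\<^bsub>G\<^esub> a \<otimes>\<^bsub>G\<^esub> inv\<^bsub>G\<^esub> x \<in> M" if x: "x \<in> carrier G" and a: "a \<in> M" for x a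
  proof -
    obtain w where w: "w \<in> A" "a = snd w" using a by (auto simp: M_def)
    have xw: "(ev, x) \<in> carrier W" using x by (auto simp: W_carrier)
    have "(ev, x) \<otimes>\<^bsub>W\<^esub> w \<otimes>\<^bsub>W\<^esub> inv\<^bsub>W\<^esub> (ev, x) \<in> A"
      using A.inv_op_closed2 xw w(1) by blast
    moreover have "snd ((ev, x) \<otimes>\<^bsub>W\<^esub> w \<otimes>\<^bsub>W\<^esub> inv\<^bsub>W\<^esub> (ev, x)) = x \<otimes>\<^bsub>G\<^esub> a \<otimes>\<^bsub>G\<^esub> inv\<^bsub>G\<^esub> x"
      using W_mult_snd W_inv_snd[OF xw] w by simp
    ultimately show ?thesis unfolding M_def by (metis image_eqI)
  qed
  have MN: "M \<lhd> G" using G.normal_inv_iff subM conjM by blast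
  have abM: "\<forall>x\<in>M. \<forall>y\<in>M. x \<otimes>\<^bsub>G\<^esub> y = y \<otimes>\<^bsub>G\<^esub> x"
    using ab W_mult_snd unfolding M_def by (metis (no_types, lifting) imageE)
  have K: "abn n (\<sigma> ` M)"
  proof
    fix p assume "p \<in> \<sigma> ` M" thus "p permutes {1..n}" using MG sig_perm by auto
  next
    fix p q assume "p \<in> \<sigma> ` M" "q \<in> \<sigma> ` M"
    then obtain a b where ab: "a \<in> M" "b \<in> M" "p = \<sigma> a" "q = \<sigma> b" by auto
    have g: "a \<in> carrier G" "b \<in> carrier G" using ab MG by auto
    show "p \<circ> q = q \<circ> p" using ab abM sig_mult[OF g] sig_mult[OF g(2,1)] by metis
    have "p \<circ> inv' q = \<sigma> (a \<otimes>\<^bsub>G\<^esub> inv\<^bsub>G\<^esub> b)" using ab g sig_inv by (simp add: sym_group_mult)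
    moreover have "a \<otimes>\<^bsub>G\<^esub> inv\<^bsub>G\<^esub> b \<in> M" using subM ab by (simp add: subgroup.m_closed subgroup.m_inv_closed)
    ultimately show "p \<circ> inv' q \<in> \<sigma> ` M" by blast
  next
    fix t p assume t: "t permutes {1..n}" and "p \<in> \<sigma> ` M"
    then obtain a where a: "a \<in> M" "p = \<sigma> a" by auto
    have "t \<in> carrier (sym_group n)" using t by (simp add: sym_group_carrier)
    then obtain x where x: "x \<in> carrier G" "t = \<sigma> x" using surj by (metis imageE)
    have aG: "a \<in> carrier G" using a MG by auto
    have "t \<circ> p \<circ> inv' t = \<sigma> (x \<otimes>\<^bsub>G\<^esub> a \<otimes>\<^bsub>G\<^esub> inv\<^bsub>G\<^esub> x)"
      using x a aG sig_inv by (simp add: sym_group_mult)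
    thus "t \<circ> p \<circ> inv' t \<in> \<sigma> ` M" using conjM[OF x(1) a(1)] by blast
  qed
  have "M \<subseteq> kernel G (sym_group n) \<sigma>"
    using abn.key[OF K n5] MG by (auto simp: kernel_def sym_group_one)
  hence "M = {\<one>\<^bsub>G\<^esub>}" using ss MN abM by blast
  thus ?thesis using AW by (force simp: M_def W_carrier wr_base_def)
qed

end

theorem theorem3p7:
  fixes G :: "('a, 'c) monoid_scheme" and H :: "('b, 'd) monoid_scheme"
    and n :: nat and \<sigma> :: "'a \<Rightarrow> nat \<Rightarrow> nat"
  assumes "n \<ge> 5"
    and "group G" and "group H"
    and "carrier G \<noteq> {\<one>\<^bsub>G\<^esub>}" and "carrier H \<noteq> {\<one>\<^bsub>H\<^esub>}"
    and "\<sigma> \<in> hom G (sym_group n)"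
    and "\<sigma> ` carrier G = carrier (sym_group n)"
  shows "(\<forall>A. A \<lhd> wreath H n G \<sigma> \<and>
              (\<forall>x\<in>A. \<forall>y\<in>A. x \<otimes>\<^bsub>wreath H n G \<sigma>\<^esub> y = y \<otimes>\<^bsub>wreath H n G \<sigma>\<^esub> x)
              \<longrightarrow> A \<subseteq> wr_base H n G)
     \<longleftrightarrow>
         (\<forall>N. N \<lhd> G \<and> (\<forall>x\<in>N. \<forall>y\<in>N. x \<otimes>\<^bsub>G\<^esub> y = y \<otimes>\<^bsub>G\<^esub> x)
              \<and> N \<subseteq> kernel G (sym_group n) \<sigma>
              \<longrightarrow> N = {\<one>\<^bsub>G\<^esub>})"
  proof -
  interpret wr G H n \<sigma>
    by (rule wr.intro[OF assms(2) assms(3)]) (simp add: wr_axioms_def assms(6))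
  show ?thesis
  proof
    assume "\<forall>A. A \<lhd> wreath H n G \<sigma> \<and>
              (\<forall>x\<in>A. \<forall>y\<in>A. x \<otimes>\<^bsub>wreath H n G \<sigma>\<^esub> y = y \<otimes>\<^bsub>wreath H n G \<sigma>\<^esub> x)
              \<longrightarrow> A \<subseteq> wr_base H n G"
    then show "\<forall>N. N \<lhd> G \<and> (\<forall>x\<in>N. \<forall>y\<in>N. x \<otimes>\<^bsub>G\<^esub> y = y \<otimes>\<^bsub>G\<^esub> x)
              \<and> N \<subseteq> kernel G (sym_group n) \<sigma>
              \<longrightarrow> N = {\<one>\<^bsub>G\<^esub>}" using dir1 by blast
  next
    assume "\<forall>N. N \<lhd> G \<and> (\<forall>x\<in>N. \<forall>y\<in>N. x \<otimes>\<^bsub>G\<^esub> y = y \<otimes>\<^bsub>G\<^esub> x)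
              \<and> N \<subseteq> kernel G (sym_group n) \<sigma>
              \<longrightarrow> N = {\<one>\<^bsub>G\<^esub>}"
    then show "\<forall>A. A \<lhd> wreath H n G \<sigma> \<and>
              (\<forall>x\<in>A. \<forall>y\<in>A. x \<otimes>\<^bsub>wreath H n G \<sigma>\<^esub> y = y \<otimes>\<^bsub>wreath H n G \<sigma>\<^esub> x)
              \<longrightarrow> A \<subseteq> wr_base H n G" using dir2[OF assms(1) assms(7)] by blast
  qed
qed

end
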